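(* Let $S=\{(x_1,x_2)\in\mathbb{R}^2:x_2-x_1^2\ge0\}$, $\tilde S^{o}=\{(x_0,x_1,x_2):x_0x_2-x_1^2\ge0,\ x_0>0\}$, $\tilde S^{c}=\{(x_0,x_1,x_2):x_0x_2-x_1^2\ge0,\ x_0\ge0\}$, and $\tilde G=\{X_0,\ X_0X_2-X_1^2,\ X_0^2+X_1^2+X_2^2-1,\ 1-X_0^2-X_1^2-X_2^2\}$. Then $X_0+X_2>0$ on $\mathrm{conv}(\overline{\tilde S^{o}})\setminus\{0\}$ (so this cone is closed and pointed), $\tilde S^{c}\setminus\overline{\tilde S^{o}}=\{(0,0,x_2):x_2<0\}\neq\emptyset$ (so $S$ is not closed at $\infty$), and $\widetilde{\mathrm{TH}}_k(\tilde G)=\mathbb{R}^2$ for every $k\ge1$; in particular $\bigcap_k\widetilde{\mathrm{TH}}_k(\tilde G)\neq\overline{\mathrm{conv}(S)}=S$.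
   Context: For a finite set $H$ of polynomials, $\mathcal{Q}_k(H)=\{\sum_{j}\sigma_jh_j:h_0=1,\ \sigma_j\text{ sums of squares},\ \deg(\sigma_jh_j)\le2k\}$. $\widetilde{\mathrm{TH}}_k(\tilde G)=\{(x_1,x_2):\tilde l(1,x_1,x_2)\ge0\ \forall\tilde l\in\mathcal{Q}_k(\tilde G)\text{ that is a linear form in }(X_0,X_1,X_2)\text{ or }0\}$. A closed convex cone $K$ is pointed if $K\cap(-K)=\{0\}$; $S$ is closed at $\infty$ if $\overline{\tilde S^{o}}=\tilde S^{c}$. *)

theory Defs
  imports "HOL-Analysis.Analysis"
begin

text \<open>Points of R^3 are triples (x0,x1,x2); polynomials in X0,X1,X2 with real
coefficients are represented by their (faithful, since R is infinite) polynomial functions.\<close>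

type_synonym pt3 = "real \<times> real \<times> real"
type_synonym rpoly3 = "pt3 \<Rightarrow> real"

definition monoms3 :: "nat \<Rightarrow> (nat \<times> nat \<times> nat) set" where
  "monoms3 d = {(a,b,e). a + b + e \<le> d}"

definition deg_le :: "rpoly3 \<Rightarrow> nat \<Rightarrow> bool" where
  "deg_le f d \<longleftrightarrow> (\<exists>c :: nat \<times> nat \<times> nat \<Rightarrow> real.
      f = (\<lambda>(x0,x1,x2). \<Sum>(a,b,e)\<in>monoms3 d. c (a,b,e) * x0^a * x1^b * x2^e))"

definition is_poly3 :: "rpoly3 \<Rightarrow> bool" where
  "is_poly3 f \<longleftrightarrow> (\<exists>d. deg_le f d)"

definition is_sos :: "rpoly3 \<Rightarrow> bool" where
  "is_sos \<sigma> \<longleftrightarrow> (\<exists>ps. (\<forall>p\<in>set ps. is_poly3 p) \<and> \<sigma> = (\<lambda>x. \<Sum>p\<leftarrow>ps. (p x)^2))"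

text \<open>The finite set H is given as a list; h_0 = 1, h_{j+1} = H ! j.\<close>
definition hh :: "rpoly3 list \<Rightarrow> nat \<Rightarrow> rpoly3" where
  "hh H j = (if j = 0 then (\<lambda>_. 1) else H ! (j - 1))"

definition Qmod :: "nat \<Rightarrow> rpoly3 list \<Rightarrow> rpoly3 set" where
  "Qmod k H = {f. \<exists>\<sigma> :: nat \<Rightarrow> rpoly3.
      (\<forall>j\<le>length H. is_sos (\<sigma> j) \<and> deg_le (\<lambda>x. \<sigma> j x * hh H j x) (2 * k)) \<and>
      f = (\<lambda>x. \<Sum>j\<le>length H. \<sigma> j x * hh H j x)}"

definition is_linform :: "rpoly3 \<Rightarrow> bool" where
  "is_linform l \<longleftrightarrow> (\<exists>a b c. l = (\<lambda>(x0,x1,x2). a * x0 + b * x1 + c * x2))"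

definition THk :: "nat \<Rightarrow> rpoly3 list \<Rightarrow> (real \<times> real) set" where
  "THk k G = {(x1,x2). \<forall>l\<in>Qmod k G. is_linform l \<longrightarrow> l (1,x1,x2) \<ge> 0}"

definition pointed :: "'a::real_vector set \<Rightarrow> bool" where
  "pointed K \<longleftrightarrow> K \<inter> uminus ` K = {0}"

definition S2 :: "(real \<times> real) set" where
  "S2 = {(x1,x2). x2 - x1^2 \<ge> 0}"

definition So :: "pt3 set" where
  "So = {(x0,x1,x2). x0 * x2 - x1^2 \<ge> 0 \<and> x0 > 0}"

definition Sc :: "pt3 set" where
  "Sc = {(x0,x1,x2). x0 * x2 - x1^2 \<ge> 0 \<and> x0 \<ge> 0}"

definition closed_at_infinity :: "pt3 set \<Rightarrow> pt3 set \<Rightarrow> bool" where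
  "closed_at_infinity So' Sc' \<longleftrightarrow> closure So' = Sc'"

definition Gt :: "rpoly3 list" where
  "Gt = [(\<lambda>(x0,x1,x2). x0),
         (\<lambda>(x0,x1,x2). x0 * x2 - x1^2),
         (\<lambda>(x0,x1,x2). x0^2 + x1^2 + x2^2 - 1),
         (\<lambda>(x0,x1,x2). 1 - x0^2 - x1^2 - x2^2)]"

end

theory Submission
  imports Defs
begin

definition Cc :: "pt3 set" where
  "Cc = {x. 0 \<le> fst x \<and> 0 \<le> snd (snd x) \<and> (fst (snd x))^2 \<le> fst x * snd (snd x)}"

lemma closed_Cc: "closed Cc"
  unfolding Cc_def
  by (intro closed_Collect_conj closed_Collect_le continuous_intros)

lemma key_ineq:
  fixes u0 u1 u2 v0 v1 v2 :: real
  assumes "0 \<le> u0" "0 \<le> u2" "u1^2 \<le> u0*u2" "0 \<le> v0" "0 \<le> v2" "v1^2 \<le> v0 * v2"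
  shows "2*u1 * v1 \<le> u0 * v2 + v0 * u2"
proof -
  have s: "0 \<le> u0 * v2 + v0 * u2" using assms by simp
  have "(u0 * v2 + v0 * u2)^2 - 4*(u0*u2)*(v0 * v2) = (u0 * v2 - v0 * u2)^2" by algebra
  hence a: "4*(u0*u2)*(v0 * v2) \<le> (u0 * v2 + v0 * u2)^2" using zero_le_power2[of "u0 * v2 - v0 * u2"] by linarith
  have "u1^2 * v1^2 \<le> (u0*u2)*(v0 * v2)"
    using assms by (intro mult_mono) auto
  hence "(2*u1 * v1)^2 \<le> (u0 * v2 + v0 * u2)^2" using a by (simp add: power_mult_distrib)
  hence "\<bar>2*u1 * v1\<bar> \<le> \<bar>u0 * v2 + v0 * u2\<bar>" using abs_le_square_iff by blast
  thus ?thesis using s by linarith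
qed

lemma convex_Cc: "convex Cc"
  unfolding convex_def
proof (intro ballI allI impI)
  fix x y :: pt3 and u v :: real
  assume x: "x \<in> Cc" and y: "y \<in> Cc" and uv: "0 \<le> u" "0 \<le> v" "u + v = 1"
  obtain x0 x1 x2 where xe: "x = (x0,x1,x2)" by (cases x) auto
  obtain y0 y1 y2 where ye: "y = (y0,y1,y2)" by (cases y) auto
  have X: "0 \<le> x0" "0 \<le> x2" "x1^2 \<le> x0*x2" using x xe by (auto simp: Cc_def)
  have Y: "0 \<le> y0" "0 \<le> y2" "y1^2 \<le> y0*y2" using y ye by (auto simp: Cc_def)
  have k: "2*x1*y1 \<le> x0*y2 + y0*x2" using key_ineq[OF X Y] .
  have e1: "(u*x0 + v * y0)*(u*x2+v * y2) - (u*x1+v * y1)^2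
     = u^2*(x0*x2 - x1^2) + v^2*(y0*y2-y1^2) + u * v * ((x0*y2 + y0*x2) - 2*x1*y1)"
    by (simp add: algebra_simps power2_eq_square)
  have "0 \<le> u^2*(x0*x2 - x1^2) + v^2*(y0*y2-y1^2) + u * v * ((x0*y2 + y0*x2) - 2*x1*y1)"
    using X Y k uv by (intro add_nonneg_nonneg mult_nonneg_nonneg) auto
  hence "(u*x1+v * y1)^2 \<le> (u*x0 + v * y0)*(u*x2+v * y2)" using e1 by linarith
  thus "u *\<^sub>R x + v *\<^sub>R y \<in> Cc" using X Y uv by (simp add: Cc_def xe ye)
qed

lemma So_sub: "So \<subseteq> Cc"
proof
  fix x assume "x \<in> So"
  then obtain a b c where e: "x = (a,b,c)" and h: "a*c - b^2 \<ge> 0" "a > 0" by (auto simp: So_def)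
  have "0 \<le> a*c" using h zero_le_power2[of b] by linarith
  hence "0 \<le> c" using h by (simp add: zero_le_mult_iff)
  thus "x \<in> Cc" using h e by (auto simp: Cc_def)
qed

lemma Cc_sub: "Cc \<subseteq> closure So"
proof
  fix x assume xC: "x \<in> Cc"
  obtain a b c where e: "x = (a,b,c)" by (cases x) auto
  have h: "0 \<le> a" "0 \<le> c" "b^2 \<le> a*c" using xC e by (auto simp: Cc_def)
  define f where "f = (\<lambda>n::nat. (a + 1/Suc n, b, c + 1/Suc n))"
  have "f n \<in> So" for n
  proof -
    define d where "d = 1/real (Suc n)"
    have p: "0 < d" unfolding d_def by simp
    have "(a + d)*(c + d) - b^2 = (a*c - b^2) + (a+c)*d + d^2"
      by (simp add: algebra_simps power2_eq_square)
    moreover have "0 \<le> (a+c)*d" using h p by simp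
    moreover have "0 \<le> d^2" by simp
    ultimately have "(a + d)*(c + d) - b^2 \<ge> 0" "a + d > 0" using h p by linarith+
    thus ?thesis unfolding f_def So_def d_def by auto
  qed
  moreover have "f \<longlonglongrightarrow> x"
  proof -
    have z: "(\<lambda>n. 1/real (Suc n)) \<longlonglongrightarrow> 0" by (rule LIMSEQ_Suc[OF lim_const_over_n])
    have "(\<lambda>n. (a + 1/real (Suc n), b, c + 1/real (Suc n))) \<longlonglongrightarrow> (a+0, b, c+0)"
      by (intro tendsto_Pair tendsto_add tendsto_const z)
    thus ?thesis unfolding f_def e by simp
  qed
  ultimately show "x \<in> closure So" by (meson closure_sequential)
qed


lemma closure_So: "closure So = Cc"
  using So_sub Cc_sub closed_Cc by (meson closure_minimal subset_antisym)

lemma hull_So: "convex hull (closure So) = Cc"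
  using closure_So convex_Cc by (simp add: convex_hull_eq)

lemma part1: "\<forall>x\<in>Cc - {0}. fst x + snd (snd x) > 0"
proof
  fix x assume x: "x \<in> Cc - {0}"
  obtain a b c where e: "x = (a,b,c)" by (cases x) auto
  have h: "0 \<le> a" "0 \<le> c" "b^2 \<le> a*c" "\<not> (a = 0 \<and> b = 0 \<and> c = 0)"
    using x e by (auto simp: Cc_def zero_prod_def)
  show "fst x + snd (snd x) > 0"
  proof (rule ccontr)
    assume "\<not> fst x + snd (snd x) > 0"
    hence "a = 0" "c = 0" using h e by auto
    hence "b = 0" using h by simp
    thus False using h \<open>a = 0\<close> \<open>c = 0\<close> by simp
  qed
qed

lemma pointed_Cc: "pointed Cc"
  unfolding pointed_def
proof
  show "Cc \<inter> uminus ` Cc \<subseteq> {0}"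
  proof
    fix x assume x: "x \<in> Cc \<inter> uminus ` Cc"
    then obtain y where y: "y \<in> Cc" "x = - y" by auto
    obtain a b c where e: "x = (a,b,c)" by (cases x) auto
    have h: "0 \<le> a" "0 \<le> c" "b^2 \<le> a*c" using x e by (auto simp: Cc_def)
    have "y = (-a,-b,-c)" using y e by (simp add: prod_eq_iff)
    hence "0 \<le> -a" "0 \<le> -c" using y by (auto simp: Cc_def)
    hence "a = 0" "c = 0" using h by auto
    hence "b = 0" using h by simp
    thus "x \<in> {0}" using e \<open>a = 0\<close> \<open>c = 0\<close> by (simp add: zero_prod_def)
  qed
  show "{0} \<subseteq> Cc \<inter> uminus ` Cc"
    by (auto simp: Cc_def zero_prod_def image_iff intro!: bexI[of _ "(0,0,0)"])
qed

lemma diff: "Sc - Cc = {(0, 0, x2) | x2. x2 < 0}"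
proof (intro subset_antisym subsetI)
  fix x assume x: "x \<in> Sc - Cc"
  obtain a b c where e: "x = (a,b,c)" by (cases x) auto
  have h: "0 \<le> a" "b^2 \<le> a*c" "\<not> (0 \<le> c)" using x e by (auto simp: Sc_def Cc_def)
  have ac: "a*c \<ge> 0" using h(2) zero_le_power2[of b] by linarith
  have "a = 0"
  proof (rule ccontr)
    assume "a \<noteq> 0"
    hence "0 < a" using h by simp
    hence "a*c < 0" using h(3) by (simp add: mult_pos_neg)
    thus False using ac by simp
  qed
  hence "b = 0" using h by simp
  thus "x \<in> {(0, 0, x2) | x2. x2 < 0}" using e h \<open>a = 0\<close> by auto
next
  fix x assume "x \<in> {(0::real, 0::real, x2::real) | x2. x2 < 0}"
  thus "x \<in> Sc - Cc" by (auto simp: Sc_def Cc_def)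
qed

lemma sos_nonneg: "is_sos s \<Longrightarrow> 0 \<le> s x"
  unfolding is_sos_def by (auto intro!: sum_list_nonneg)

lemma Qmod_nonneg:
  assumes f: "f \<in> Qmod k Gt" and x: "x \<in> Sc" and n: "(fst x)^2 + (fst (snd x))^2 + (snd (snd x))^2 = 1"
  shows "0 \<le> f x"
proof -
  obtain \<sigma> where s: "\<forall>j\<le>length Gt. is_sos (\<sigma> j)" and fe: "f = (\<lambda>x. \<Sum>j\<le>length Gt. \<sigma> j x * hh Gt j x)"
    using f unfolding Qmod_def by blast
  obtain a b c where e: "x = (a,b,c)" by (cases x) auto
  have h: "0 \<le> a" "0 \<le> a*c - b^2" "a^2+b^2+c^2 = 1" using x n e by (auto simp: Sc_def)
  have hn: "0 \<le> hh Gt j x" if "j \<le> length Gt" for j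
  proof -
    have "j \<in> {0,1,2,3,4}" using that by (auto simp: Gt_def)
    thus ?thesis using h by (auto simp: hh_def Gt_def e)
  qed
  show ?thesis unfolding fe
  proof (intro sum_nonneg)
    fix j assume "j \<in> {..length Gt}"
    hence j: "j \<le> length Gt" by simp
    show "0 \<le> \<sigma> j x * hh Gt j x"
      using sos_nonneg[OF s[rule_format, OF j]] hn[OF j] by simp
  qed
qed

lemma THk_UNIV: "THk k Gt = UNIV"
proof -
  have "(x1,x2) \<in> THk k Gt" for x1 x2
    unfolding THk_def
  proof (clarify)
    fix l assume l: "l \<in> Qmod k Gt" and "is_linform l"
    then obtain a b c where le: "l = (\<lambda>(x0,x1,x2). a * x0 + b * x1 + c * x2)"
      unfolding is_linform_def by blast
    have "0 \<le> l (0,0,1)" by (rule Qmod_nonneg[OF l]) (auto simp: Sc_def)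
    moreover have "0 \<le> l (0,0,-1)" by (rule Qmod_nonneg[OF l]) (auto simp: Sc_def)
    ultimately have c0: "c = 0" by (simp add: le)
    define N where "N = sqrt (1 + x1^2 + x1^4)"
    have N1: "N^2 = 1 + x1^2 + x1^4" unfolding N_def
      by (simp add: add_nonneg_nonneg)
    have Np: "N > 0" unfolding N_def by (simp add: add_pos_nonneg)
    have "0 \<le> l (1/N, x1/N, x1^2/N)"
    proof (rule Qmod_nonneg[OF l])
      show "(1/N, x1/N, x1^2/N) \<in> Sc" using Np
        by (simp add: Sc_def power2_eq_square)
      have "0 < N^2" using Np by simp
      hence pz: "1 + x1^2 + x1^4 \<noteq> 0" using N1 by linarith
      have "(1/N)^2 + (x1/N)^2 + (x1^2/N)^2 = (1 + x1^2 + x1^4)/N^2"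
        by (simp add: power_divide add_divide_distrib flip: power_mult)
      also have "\<dots> = 1" using N1 pz by simp
      finally show "(fst (1/N, x1/N, x1^2/N))^2 + (fst (snd (1/N, x1/N, x1^2/N)))^2 + (snd (snd (1/N, x1/N, x1^2/N)))^2 = 1"
        by simp
    qed
    hence "0 \<le> (a + b*x1)/N" using c0 by (simp add: le add_divide_distrib)
    hence "0 \<le> a + b*x1" using Np by (simp add: zero_le_divide_iff)
    thus "0 \<le> l (1, x1, x2)" using c0 by (simp add: le)
  qed
  thus ?thesis by auto
qed

lemma convex_S2: "convex S2"
  unfolding convex_def
proof (intro ballI allI impI)
  fix x y :: "real \<times> real" and u v :: real
  assume x: "x \<in> S2" and y: "y \<in> S2" and uv: "0 \<le> u" "0 \<le> v" "u + v = 1"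
  obtain x1 x2 where xe: "x = (x1,x2)" by (cases x) auto
  obtain y1 y2 where ye: "y = (y1,y2)" by (cases y) auto
  have X: "x1^2 \<le> x2" "y1^2 \<le> y2" using x y xe ye by (auto simp: S2_def)
  have v: "v = 1 - u" using uv by simp
  have "u*x1^2 + v * y1^2 - (u*x1 + v * y1)^2 = u * v * (x1-y1)^2"
    unfolding v by (simp add: algebra_simps power2_eq_square)
  moreover have "0 \<le> u * v * (x1-y1)^2" using uv by simp
  moreover have "u*x1^2 + v * y1^2 \<le> u*x2 + v * y2"
    using X uv by (intro add_mono mult_left_mono) auto
  ultimately have "(u*x1 + v * y1)^2 \<le> u*x2 + v * y2" by linarith
  thus "u *\<^sub>R x + v *\<^sub>R y \<in> S2" by (simp add: S2_def xe ye)
qed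

lemma closed_S2: "closed S2"
proof -
  have "S2 = {x. (fst x)^2 \<le> snd x}" by (auto simp: S2_def)
  moreover have "closed {x::real\<times>real. (fst x)^2 \<le> snd x}"
    by (intro closed_Collect_le continuous_intros)
  ultimately show ?thesis by simp
qed

theorem mainTheorem18:
  shows "(\<forall>x\<in>convex hull (closure So) - {0}. fst x + snd (snd x) > 0)
    \<and> closed (convex hull (closure So)) \<and> pointed (convex hull (closure So))
    \<and> Sc - closure So = {(0, 0, x2) | x2. x2 < 0}
    \<and> Sc - closure So \<noteq> {}
    \<and> \<not> closed_at_infinity So Sc
    \<and> (\<forall>k\<ge>1. THk k Gt = UNIV)
    \<and> (\<Inter>k\<in>{1..}. THk k Gt) \<noteq> closure (convex hull S2)
    \<and> closure (convex hull S2) = S2"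
proof -
  have cS2: "closure (convex hull S2) = S2"
  proof -
    have "convex hull S2 = S2" using convex_S2 by (rule convex_hull_eq[THEN iffD2])
    thus ?thesis using closed_S2 by (simp add: closure_closed)
  qed
  have ne: "Sc - closure So \<noteq> {}" unfolding closure_So diff by (auto intro: exI[of _ "-1::real"])
  have I: "(\<Inter>k\<in>{1..}. THk k Gt) = UNIV" using THk_UNIV by auto
  have "(0, -1) \<notin> S2" by (simp add: S2_def)
  hence "(\<Inter>k\<in>{1..}. THk k Gt) \<noteq> closure (convex hull S2)" unfolding I cS2 by auto
  moreover have "\<not> closed_at_infinity So Sc"
    using ne unfolding closed_at_infinity_def by auto
  ultimately show ?thesis
    unfolding hull_So closure_So[symmetric]
    using part1 closed_Cc pointed_Cc diff ne THk_UNIV cS2 closure_So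
    by (simp add: hull_So)
qed

end
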